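(* Let $V=2V_2\oplus V_4$ and $R=\mathcal{O}(V)^{\mathrm{SL}_2(\mathbb{C})}$. Then $R$ has no homogeneous system of parameters with degrees $2,2,2,2,3,3,3,4$; indeed, all invariants of degree $2$ or $3$ vanish at every point $(ax^2,bx^2,xy^3)$, $a,b\in\mathbb{C}$.
   Context: $V_k$ is the $\mathrm{SL}_2(\mathbb{C})$-module of complex binary forms of degree $k$ in $x,y$; $2V_2=V_2\oplus V_2$; $R$ is the graded algebra of invariant polynomial functions on $V$. A homogeneous system of parameters is a set of algebraically independent homogeneous elements of positive degree over whose generated subalgebra $R$ is integral. *)

theory Defs
  imports Complex_Main "HOL-Library.Poly_Mapping" "HOL-Library.Multiset"
begin

text \<open>A point of V = V_2 + V_2 + V_4 is a coefficient vector v :: nat => complex,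
  using coordinates 0..10: v 0..v 2 are the coefficients of the first quadratic form,
  v 3..v 5 those of the second quadratic form, v 6..v 10 those of the quartic.\<close>

definition bform :: "nat \<Rightarrow> (nat \<Rightarrow> complex) \<Rightarrow> complex \<Rightarrow> complex \<Rightarrow> complex" where
  "bform k c x y = (\<Sum>i\<le>k. c i * x ^ (k - i) * y ^ i)"

definition comp1 :: "(nat \<Rightarrow> complex) \<Rightarrow> nat \<Rightarrow> complex" where
  "comp1 v = (\<lambda>i. v i)"
definition comp2 :: "(nat \<Rightarrow> complex) \<Rightarrow> nat \<Rightarrow> complex" where
  "comp2 v = (\<lambda>i. v (3 + i))"
definition comp3 :: "(nat \<Rightarrow> complex) \<Rightarrow> nat \<Rightarrow> complex" where
  "comp3 v = (\<lambda>i. v (6 + i))"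

definition sl2_rel :: "complex \<Rightarrow> complex \<Rightarrow> complex \<Rightarrow> complex \<Rightarrow>
    (nat \<Rightarrow> complex) \<Rightarrow> (nat \<Rightarrow> complex) \<Rightarrow> bool" where
  "sl2_rel a b c d v w \<longleftrightarrow>
     (\<forall>x y. bform 2 (comp1 w) x y = bform 2 (comp1 v) (a*x + b*y) (c*x + d*y)) \<and>
     (\<forall>x y. bform 2 (comp2 w) x y = bform 2 (comp2 v) (a*x + b*y) (c*x + d*y)) \<and>
     (\<forall>x y. bform 4 (comp3 w) x y = bform 4 (comp3 v) (a*x + b*y) (c*x + d*y))"

definition sl2_invariant :: "((nat \<Rightarrow> complex) \<Rightarrow> complex) \<Rightarrow> bool" where
  "sl2_invariant F \<longleftrightarrow>
     (\<forall>a b c d v w. a*d - b*c = 1 \<longrightarrow> sl2_rel a b c d v w \<longrightarrow> F w = F v)"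

inductive poly_fun :: "((nat \<Rightarrow> complex) \<Rightarrow> complex) \<Rightarrow> bool" where
  pf_const: "poly_fun (\<lambda>_. k)"
| pf_coord: "i < 11 \<Longrightarrow> poly_fun (\<lambda>v. v i)"
| pf_add: "poly_fun f \<Longrightarrow> poly_fun g \<Longrightarrow> poly_fun (\<lambda>v. f v + g v)"
| pf_mult: "poly_fun f \<Longrightarrow> poly_fun g \<Longrightarrow> poly_fun (\<lambda>v. f v * g v)"

inductive hom_poly :: "nat \<Rightarrow> ((nat \<Rightarrow> complex) \<Rightarrow> complex) \<Rightarrow> bool" where
  hp_const: "hom_poly 0 (\<lambda>_. k)"
| hp_coord: "i < 11 \<Longrightarrow> hom_poly 1 (\<lambda>v. v i)"
| hp_add: "hom_poly n f \<Longrightarrow> hom_poly n g \<Longrightarrow> hom_poly n (\<lambda>v. f v + g v)"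
| hp_mult: "hom_poly n f \<Longrightarrow> hom_poly m g \<Longrightarrow> hom_poly (n + m) (\<lambda>v. f v * g v)"

definition invR :: "((nat \<Rightarrow> complex) \<Rightarrow> complex) set" where
  "invR = {F. poly_fun F \<and> sl2_invariant F}"

inductive alg_gen :: "((nat \<Rightarrow> complex) \<Rightarrow> complex) list \<Rightarrow> ((nat \<Rightarrow> complex) \<Rightarrow> complex) \<Rightarrow> bool"
  for fs where
  ag_const: "alg_gen fs (\<lambda>_. k)"
| ag_gen: "i < length fs \<Longrightarrow> alg_gen fs (fs ! i)"
| ag_add: "alg_gen fs f \<Longrightarrow> alg_gen fs g \<Longrightarrow> alg_gen fs (\<lambda>v. f v + g v)"
| ag_mult: "alg_gen fs f \<Longrightarrow> alg_gen fs g \<Longrightarrow> alg_gen fs (\<lambda>v. f v * g v)"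

definition mpoly_eval :: "((nat \<Rightarrow>\<^sub>0 nat) \<Rightarrow>\<^sub>0 complex) \<Rightarrow>
    ((nat \<Rightarrow> complex) \<Rightarrow> complex) list \<Rightarrow> (nat \<Rightarrow> complex) \<Rightarrow> complex" where
  "mpoly_eval P fs v = (\<Sum>m\<in>Poly_Mapping.keys P. Poly_Mapping.lookup P m * (\<Prod>i<length fs. (fs ! i) v ^ Poly_Mapping.lookup m i))"

definition alg_indep :: "((nat \<Rightarrow> complex) \<Rightarrow> complex) list \<Rightarrow> bool" where
  "alg_indep fs \<longleftrightarrow>
     (\<forall>P. (\<forall>m\<in>Poly_Mapping.keys P. Poly_Mapping.keys m \<subseteq> {..<length fs}) \<longrightarrow> (\<forall>v. mpoly_eval P fs v = 0) \<longrightarrow> P = 0)"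

definition integral_over :: "((nat \<Rightarrow> complex) \<Rightarrow> complex) list \<Rightarrow> ((nat \<Rightarrow> complex) \<Rightarrow> complex) \<Rightarrow> bool" where
  "integral_over fs r \<longleftrightarrow>
     (\<exists>n cs. n > 0 \<and> (\<forall>i<n. alg_gen fs (cs i)) \<and>
        (\<forall>v. r v ^ n + (\<Sum>i<n. cs i v * r v ^ i) = 0))"

definition is_hsop :: "((nat \<Rightarrow> complex) \<Rightarrow> complex) list \<Rightarrow> nat list \<Rightarrow> bool" where
  "is_hsop fs ds \<longleftrightarrow> length fs = length ds \<and>
     (\<forall>i<length fs. fs ! i \<in> invR \<and> ds ! i > 0 \<and> hom_poly (ds ! i) (fs ! i)) \<and>
     alg_indep fs \<and> (\<forall>r\<in>invR. integral_over fs r)"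

text \<open>The point (a x^2, b x^2, x y^3).\<close>
definition special_pt :: "complex \<Rightarrow> complex \<Rightarrow> nat \<Rightarrow> complex" where
  "special_pt a b = (\<lambda>i. if i = 0 then a else if i = 3 then b else if i = 9 then 1 else 0)"

end

theory Submission
  imports Defs "HOL-Computational_Algebra.Fundamental_Theorem_Algebra"
begin

definition qtr :: "complex\<Rightarrow>complex\<Rightarrow>complex\<Rightarrow>complex\<Rightarrow>(nat\<Rightarrow>complex)\<Rightarrow>nat\<Rightarrow>complex" where
"qtr a b c d u k = (if k=0 then u 0*a^2 + u 1*a*c + u 2*c^2 else if k=1 then 2*u 0*a*b + u 1*(a*d+b*c) + 2*u 2*c*d else u 0*b^2 + u 1*b*d + u 2*d^2)"

definition qrt :: "complex\<Rightarrow>complex\<Rightarrow>complex\<Rightarrow>complex\<Rightarrow>(nat\<Rightarrow>complex)\<Rightarrow>nat\<Rightarrow>complex" where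
"qrt a b c d g k = (if k=0 then g 0*a^4 + g 1*a^3*c + g 2*a^2*c^2 + g 3*a*c^3 + g 4*c^4
 else if k=1 then 4*g 0*a^3*b + g 1*(a^3*d + 3*a^2*b*c) + g 2*(2*a^2*c*d + 2*a*b*c^2) + g 3*(3*a*c^2*d + b*c^3) + 4*g 4*c^3*d
 else if k=2 then 6*g 0*a^2*b^2 + g 1*(3*a^2*b*d + 3*a*b^2*c) + g 2*(a^2*d^2 + 4*a*b*c*d + b^2*c^2) + g 3*(3*a*c*d^2 + 3*b*c^2*d) + 6*g 4*c^2*d^2
 else if k=3 then 4*g 0*a*b^3 + g 1*(3*a*b^2*d + b^3*c) + g 2*(2*a*b*d^2 + 2*b^2*c*d) + g 3*(a*d^3 + 3*b*c*d^2) + 4*g 4*c*d^3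
 else g 0*b^4 + g 1*b^3*d + g 2*b^2*d^2 + g 3*b*d^3 + g 4*d^4)"

lemma atMost2: "{..2::nat} = {0,1,2}" by auto
lemma atMost4: "{..4::nat} = {0,1,2,3,4}" by auto
lemma lessThan11: "{..<11::nat} = {0,1,2,3,4,5,6,7,8,9,10}" by (auto; presburger)

lemma bform2_tr: "bform 2 u (a*x+b*y) (c*x+d*y) = bform 2 (qtr a b c d u) x y"
  by (simp add: bform_def atMost2 qtr_def power2_eq_square algebra_simps)

lemma bform4_tr: "bform 4 u (a*x+b*y) (c*x+d*y) = bform 4 (qrt a b c d u) x y"
  by (simp add: bform_def atMost4 qrt_def power2_eq_square power3_eq_cube power4_eq_xxxx algebra_simps)

definition h0 where "h0 (u::nat\<Rightarrow>complex) (g::nat\<Rightarrow>complex) = 2*u 0*g 2 - 3*u 1*g 1 + 12*u 2*g 0"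
definition h1 where "h1 (u::nat\<Rightarrow>complex) (g::nat\<Rightarrow>complex) = 6*u 0*g 3 - 4*u 1*g 2 + 6*u 2*g 1"
definition h2 where "h2 (u::nat\<Rightarrow>complex) (g::nat\<Rightarrow>complex) = 12*u 0*g 4 - 3*u 1*g 3 + 2*u 2*g 2"
definition J where "J u g = h1 u g * h1 u g - 4 * h0 u g * h2 u g"

lemma cov0: "h0 (qtr a b c d u) (qrt a b c d g) = (a*d-b*c)^2 * (h0 u g * a^2 + h1 u g * a*c + h2 u g * c^2)"
  by (simp add: h0_def h1_def h2_def qtr_def qrt_def power2_eq_square power3_eq_cube power4_eq_xxxx algebra_simps)
lemma cov1: "h1 (qtr a b c d u) (qrt a b c d g) = (a*d-b*c)^2 * (2*h0 u g*a*b + h1 u g*(a*d+b*c) + 2*h2 u g*c*d)"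
  by (simp add: h0_def h1_def h2_def qtr_def qrt_def power2_eq_square power3_eq_cube power4_eq_xxxx algebra_simps)
lemma cov2: "h2 (qtr a b c d u) (qrt a b c d g) = (a*d-b*c)^2 * (h0 u g * b^2 + h1 u g * b*d + h2 u g * d^2)"
  by (simp add: h0_def h1_def h2_def qtr_def qrt_def power2_eq_square power3_eq_cube power4_eq_xxxx algebra_simps)
lemma Jinv: "J (qtr a b c d u) (qrt a b c d g) = (a*d-b*c)^6 * J u g"
proof -
  have e: "\<And>D p0 p1 p2::complex. (D^2*(2*p0*a*b + p1*(a*d+b*c) + 2*p2*c*d))*(D^2*(2*p0*a*b + p1*(a*d+b*c) + 2*p2*c*d))
     - 4*(D^2*(p0*a^2+p1*a*c+p2*c^2))*(D^2*(p0*b^2+p1*b*d+p2*d^2)) = D^4*(a*d-b*c)^2*(p1*p1-4*p0*p2)"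
    by (simp add: power2_eq_square power4_eq_xxxx algebra_simps)
  have p: "(a*d-b*c)^4*(a*d-b*c)^2 = (a*d-b*c)^6" by (simp flip: power_add)
  show ?thesis unfolding J_def cov0 cov1 cov2 e using p by (simp add: J_def)
qed

lemma bform2_uniq:
  assumes H: "\<forall>x y. bform 2 p x y = bform 2 q x y" and k: "k \<le> 2"
  shows "p k = q k"
proof -
  have 1: "p 0 = q 0" using H[rule_format, of 1 0] by (simp add: bform_def atMost2)
  have 2: "p 2 = q 2" using H[rule_format, of 0 1] by (simp add: bform_def atMost2)
  have 3: "p 0 + p 1 + p 2 = q 0 + q 1 + q 2" using H[rule_format, of 1 1] by (simp add: bform_def atMost2 algebra_simps)
  have "p 1 = q 1" using 1 2 3 by simp
  moreover have "k = 0 \<or> k = 1 \<or> k = 2" using k by auto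
  ultimately show ?thesis using 1 2 by auto
qed

lemma bform4_uniq:
  assumes H: "\<forall>x y. bform 4 p x y = bform 4 q x y" and k: "k \<le> 4"
  shows "p k = q k"
proof -
  have 0: "p 0 = q 0" using H[rule_format, of 1 0] by (simp add: bform_def atMost4)
  have 4: "p 4 = q 4" using H[rule_format, of 0 1] by (simp add: bform_def atMost4)
  have E1: "p 0 + p 1 + p 2 + p 3 + p 4 = q 0 + q 1 + q 2 + q 3 + q 4" using H[rule_format, of 1 1] by (simp add: bform_def atMost4 algebra_simps)
  have E2: "p 0 - p 1 + p 2 - p 3 + p 4 = q 0 - q 1 + q 2 - q 3 + q 4" using H[rule_format, of 1 "-1"] by (simp add: bform_def atMost4 algebra_simps)
  have E3: "p 0 + 2*p 1 + 4*p 2 + 8*p 3 + 16*p 4 = q 0 + 2*q 1 + 4*q 2 + 8*q 3 + 16*q 4" using H[rule_format, of 1 2] by (simp add: bform_def atMost4 algebra_simps)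
  have "2*(p 2 - q 2) = ((p 0 + p 1 + p 2 + p 3 + p 4) - (q 0 + q 1 + q 2 + q 3 + q 4))
     + ((p 0 - p 1 + p 2 - p 3 + p 4) - (q 0 - q 1 + q 2 - q 3 + q 4)) - 2*(p 0 - q 0) - 2*(p 4 - q 4)"
    by (simp add: algebra_simps)
  then have 2: "p 2 = q 2" unfolding E1 E2 by (simp add: 0 4)
  have "6*(p 3 - q 3) = ((p 0 + 2*p 1 + 4*p 2 + 8*p 3 + 16*p 4) - (q 0 + 2*q 1 + 4*q 2 + 8*q 3 + 16*q 4))
     - 2*((p 0 + p 1 + p 2 + p 3 + p 4) - (q 0 + q 1 + q 2 + q 3 + q 4)) + (p 0 - q 0) - 2*(p 2 - q 2) - 14*(p 4 - q 4)"
    by (simp add: algebra_simps)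
  then have 3: "p 3 = q 3" unfolding E1 E3 by (simp add: 0 4 2)
  have "p 1 - q 1 = ((p 0 + p 1 + p 2 + p 3 + p 4) - (q 0 + q 1 + q 2 + q 3 + q 4)) - (p 0 - q 0) - (p 2 - q 2) - (p 3 - q 3) - (p 4 - q 4)"
    by (simp add: algebra_simps)
  then have 1: "p 1 = q 1" unfolding E1 by (simp add: 0 4 2 3)
  have "k = 0 \<or> k = 1 \<or> k = 2 \<or> k = 3 \<or> k = 4" using k by auto
  with 0 1 2 3 4 show ?thesis by auto
qed

lemma bform_cong: "(\<And>k. k \<le> n \<Longrightarrow> p k = q k) \<Longrightarrow> bform n p x y = bform n q x y"
  unfolding bform_def by (rule sum.cong) auto

definition act :: "complex\<Rightarrow>complex\<Rightarrow>complex\<Rightarrow>complex\<Rightarrow>(nat\<Rightarrow>complex)\<Rightarrow>nat\<Rightarrow>complex" where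
  "act a b c d v = (\<lambda>i. if i < 3 then qtr a b c d (comp1 v) i else if i < 6 then qtr a b c d (comp2 v) (i-3)
      else qrt a b c d (comp3 v) (i-6))"

lemma sl2_rel_act: "sl2_rel a b c d v (act a b c d v)"
  unfolding sl2_rel_def
proof (intro conjI allI)
  fix x y
  have "bform 2 (comp1 (act a b c d v)) x y = bform 2 (qtr a b c d (comp1 v)) x y"
    by (rule bform_cong) (simp add: comp1_def act_def)
  then show "bform 2 (comp1 (act a b c d v)) x y = bform 2 (comp1 v) (a * x + b * y) (c * x + d * y)"
    by (simp add: bform2_tr)
  have "bform 2 (comp2 (act a b c d v)) x y = bform 2 (qtr a b c d (comp2 v)) x y"
    by (rule bform_cong) (simp add: comp2_def act_def)
  then show "bform 2 (comp2 (act a b c d v)) x y = bform 2 (comp2 v) (a * x + b * y) (c * x + d * y)"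
    by (simp add: bform2_tr)
  have "bform 4 (comp3 (act a b c d v)) x y = bform 4 (qrt a b c d (comp3 v)) x y"
    by (rule bform_cong) (simp add: comp3_def act_def)
  then show "bform 4 (comp3 (act a b c d v)) x y = bform 4 (comp3 v) (a * x + b * y) (c * x + d * y)"
    by (simp add: bform4_tr)
qed

lemma rel_act:
  assumes "sl2_rel a b c d v w" "i < 11"
  shows "w i = act a b c d v i"
proof -
  from assms(1) have R1: "\<forall>x y. bform 2 (comp1 w) x y = bform 2 (qtr a b c d (comp1 v)) x y"
    and R2: "\<forall>x y. bform 2 (comp2 w) x y = bform 2 (qtr a b c d (comp2 v)) x y"
    and R3: "\<forall>x y. bform 4 (comp3 w) x y = bform 4 (qrt a b c d (comp3 v)) x y"
    by (auto simp: sl2_rel_def bform2_tr bform4_tr)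
  show ?thesis
  proof (cases "i < 3")
    case True
    then show ?thesis using bform2_uniq[OF R1, of i] by (simp add: act_def comp1_def)
  next
    case F1: False
    show ?thesis
    proof (cases "i < 6")
      case True
      then show ?thesis using F1 bform2_uniq[OF R2, of "i-3"] by (simp add: act_def comp2_def)
    next
      case False
      then show ?thesis using F1 assms(2) bform4_uniq[OF R3, of "i-6"] by (simp add: act_def comp3_def)
    qed
  qed
qed

lemma inv_act: "sl2_invariant F \<Longrightarrow> a*d - b*c = 1 \<Longrightarrow> F (act a b c d v) = F v"
  unfolding sl2_invariant_def using sl2_rel_act by blast

lemma hom_scale: "hom_poly n f \<Longrightarrow> f (\<lambda>i. s * v i) = s^n * f v"
  by (induction rule: hom_poly.induct) (auto simp: algebra_simps power_add)

lemma hom_line: "hom_poly n f \<Longrightarrow> \<exists>p. \<forall>s. f (\<lambda>i. u i + s * w i) = poly p s"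
proof (induction rule: hom_poly.induct)
  case (hp_const k) then show ?case by (intro exI[of _ "[:k:]"]) simp
next
  case (hp_coord i) then show ?case by (intro exI[of _ "[:u i, w i:]"]) simp
next
  case (hp_add n f g)
  then obtain p q where "\<forall>s. f (\<lambda>i. u i + s * w i) = poly p s" "\<forall>s. g (\<lambda>i. u i + s * w i) = poly q s" by blast
  then show ?case by (intro exI[of _ "p+q"]) simp
next
  case (hp_mult n f m g)
  then obtain p q where "\<forall>s. f (\<lambda>i. u i + s * w i) = poly p s" "\<forall>s. g (\<lambda>i. u i + s * w i) = poly q s" by blast
  then show ?case by (intro exI[of _ "p*q"]) simp
qed

lemma hom_rep: "hom_poly n f \<Longrightarrow> (n = 0 \<longrightarrow> (\<exists>k. \<forall>v. f v = k)) \<and>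
   (n = 1 \<longrightarrow> (\<exists>l. \<forall>v. f v = (\<Sum>i<11. l i * v i))) \<and>
   (n = 2 \<longrightarrow> (\<exists>q. \<forall>v. f v = (\<Sum>i<11. \<Sum>j<11. q i j * v i * v j)))"
proof (induction rule: hom_poly.induct)
  case (hp_const k) then show ?case by auto
next
  case (hp_coord i)
  have e: "\<And>j (x::complex). (if j = i then 1 else 0) * x = (if j = i then x else 0)" by simp
  from hp_coord show ?case by (intro conjI impI exI[of _ "\<lambda>j. if j = i then 1 else 0"]) (auto simp: e)
next
  case (hp_add n f g)
  then show ?case
  proof (intro conjI impI)
    assume "n = 0" then show "\<exists>k. \<forall>v. f v + g v = k" using hp_add by auto
  next
    assume "n = 1"
    then obtain l l' where "\<forall>v. f v = (\<Sum>i<11. l i * v i)" "\<forall>v. g v = (\<Sum>i<11. l' i * v i)" using hp_add by auto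
    then show "\<exists>l. \<forall>v. f v + g v = (\<Sum>i<11. l i * v i)"
      by (intro exI[of _ "\<lambda>i. l i + l' i"]) (simp add: sum.distrib algebra_simps)
  next
    assume "n = 2"
    then obtain q q' where "\<forall>v. f v = (\<Sum>i<11. \<Sum>j<11. q i j * v i * v j)" "\<forall>v. g v = (\<Sum>i<11. \<Sum>j<11. q' i j * v i * v j)" using hp_add by auto
    then show "\<exists>q. \<forall>v. f v + g v = (\<Sum>i<11. \<Sum>j<11. q i j * v i * v j)"
      by (intro exI[of _ "\<lambda>i j. q i j + q' i j"]) (simp add: sum.distrib algebra_simps)
  qed
next
  case (hp_mult n f m g)
  show ?case
  proof (intro conjI impI)
    assume "n + m = 0" then show "\<exists>k. \<forall>v. f v * g v = k" using hp_mult by auto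
  next
    assume "n + m = 1"
    then have "(n = 0 \<and> m = 1) \<or> (n = 1 \<and> m = 0)" by auto
    then show "\<exists>l. \<forall>v. f v * g v = (\<Sum>i<11. l i * v i)"
    proof
      assume "n = 0 \<and> m = 1"
      then obtain k l where "\<forall>v. f v = k" "\<forall>v. g v = (\<Sum>i<11. l i * v i)" using hp_mult by auto
      then show ?thesis by (intro exI[of _ "\<lambda>i. k * l i"]) (simp add: sum_distrib_left algebra_simps)
    next
      assume "n = 1 \<and> m = 0"
      then obtain k l where "\<forall>v. g v = k" "\<forall>v. f v = (\<Sum>i<11. l i * v i)" using hp_mult by auto
      then show ?thesis by (intro exI[of _ "\<lambda>i. k * l i"]) (simp add: sum_distrib_left sum_distrib_right algebra_simps)
    qed
  next
    assume "n + m = 2"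
    then have "(n = 0 \<and> m = 2) \<or> (n = 1 \<and> m = 1) \<or> (n = 2 \<and> m = 0)" by auto
    then show "\<exists>q. \<forall>v. f v * g v = (\<Sum>i<11. \<Sum>j<11. q i j * v i * v j)"
    proof (elim disjE)
      assume "n = 0 \<and> m = 2"
      then obtain k q where "\<forall>v. f v = k" "\<forall>v. g v = (\<Sum>i<11. \<Sum>j<11. q i j * v i * v j)" using hp_mult by auto
      then show ?thesis by (intro exI[of _ "\<lambda>i j. k * q i j"]) (simp add: sum_distrib_left algebra_simps)
    next
      assume "n = 2 \<and> m = 0"
      then obtain k q where "\<forall>v. g v = k" "\<forall>v. f v = (\<Sum>i<11. \<Sum>j<11. q i j * v i * v j)" using hp_mult by auto
      then show ?thesis by (intro exI[of _ "\<lambda>i j. k * q i j"]) (simp add: sum_distrib_left sum_distrib_right algebra_simps)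
    next
      assume "n = 1 \<and> m = 1"
      then obtain l l' where "\<forall>v. f v = (\<Sum>i<11. l i * v i)" "\<forall>v. g v = (\<Sum>i<11. l' i * v i)" using hp_mult by auto
      then show ?thesis
        apply (intro exI[of _ "\<lambda>i j. l i * l' j"])
        apply (simp add: sum_product)
        apply (intro allI sum.cong refl)
        apply (simp add: algebra_simps)
        done
    qed
  qed
qed

lemma alg_gen_dep: "alg_gen fs c \<Longrightarrow> (\<forall>j<length fs. (fs ! j) v = (fs ! j) w) \<Longrightarrow> c v = c w"
  by (induction rule: alg_gen.induct) auto


definition ev :: "nat set \<Rightarrow> nat \<Rightarrow> complex" where "ev S = (\<lambda>k. if k \<in> S then 1 else 0)"
lemma deg2: assumes inv: "sl2_invariant F" and hp: "hom_poly 2 F" shows "F (special_pt a b) = 0"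
proof -
  obtain q where rep: "\<And>v. F v = (\<Sum>i<11. \<Sum>j<11. q i j * v i * v j)" using hom_rep[OF hp] by auto
  have T: "\<And>v. F (act 2 0 0 (1/2) v) = F v" by (rule inv_act[OF inv]) simp
  have U: "\<And>v. F (act 1 0 1 1 v) = F v" by (rule inv_act[OF inv]) simp
  note S = rep lessThan11 act_def ev_def qtr_def qrt_def comp1_def comp2_def comp3_def
  have q00: "q 0 0 = 0" using T[of "ev {0}"] by (simp add: S)
  have q33: "q 3 3 = 0" using T[of "ev {3}"] by (simp add: S)
  have q99: "q 9 9 = 0" using T[of "ev {9}"] by (simp add: S power_divide)
  have q66: "q 6 6 = 0" using T[of "ev {6}"] by (simp add: S)
  have q77: "q 7 7 = 0" using T[of "ev {7}"] by (simp add: S)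
  have "15*(q 0 3 + q 3 0) = 0" using T[of "ev {0,3}"] q00 q33 by (simp add: S, algebra)
  then have s03: "q 0 3 + q 3 0 = 0" by (metis mult_eq_0_iff zero_neq_numeral)
  have "63*(q 0 6 + q 6 0) = 0" using T[of "ev {0,6}"] q00 q66 by (simp add: S, algebra)
  then have s06: "q 0 6 + q 6 0 = 0" by (metis mult_eq_0_iff zero_neq_numeral)
  have "15*(q 0 7 + q 7 0) = 0" using T[of "ev {0,7}"] q00 q77 by (simp add: S, algebra)
  then have s07: "q 0 7 + q 7 0 = 0" by (metis mult_eq_0_iff zero_neq_numeral)
  have "3*(q 0 8 + q 8 0) = 0" using T[of "ev {0,8}"] q00 by (simp add: S, algebra)
  then have s08: "q 0 8 + q 8 0 = 0" by (metis mult_eq_0_iff zero_neq_numeral)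
  have "63*(q 3 6 + q 6 3) = 0" using T[of "ev {3,6}"] q33 q66 by (simp add: S, algebra)
  then have s36: "q 3 6 + q 6 3 = 0" by (metis mult_eq_0_iff zero_neq_numeral)
  have "15*(q 3 7 + q 7 3) = 0" using T[of "ev {3,7}"] q33 q77 by (simp add: S, algebra)
  then have s37: "q 3 7 + q 7 3 = 0" by (metis mult_eq_0_iff zero_neq_numeral)
  have "3*(q 3 8 + q 8 3) = 0" using T[of "ev {3,8}"] q33 by (simp add: S, algebra)
  then have s38: "q 3 8 + q 8 3 = 0" by (metis mult_eq_0_iff zero_neq_numeral)
  have Ua: "F (act 1 0 1 1 (ev {0,10})) = F (ev {0,10})" by (rule U)
  have Ub: "F (act 1 0 1 1 (ev {10})) = F (ev {10})" by (rule U)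
  have Uc: "F (act 1 0 1 1 (ev {3,10})) = F (ev {3,10})" by (rule U)
  have "4*(q 0 9 + q 9 0) = 0" using Ua Ub s06 s07 s08 by (simp add: S, algebra)
  then have s09: "q 0 9 + q 9 0 = 0" by (metis mult_eq_0_iff zero_neq_numeral)
  have "4*(q 3 9 + q 9 3) = 0" using Uc Ub s36 s37 s38 by (simp add: S, algebra)
  then have s39: "q 3 9 + q 9 3 = 0" by (metis mult_eq_0_iff zero_neq_numeral)
  have "F (special_pt a b) = q 0 0 * a * a + (q 0 3 + q 3 0) * a * b + q 3 3 * b * b + (q 0 9 + q 9 0) * a + (q 3 9 + q 9 3) * b + q 9 9"
    by (simp add: rep lessThan11 special_pt_def algebra_simps)
  then
  show ?thesis using q00 q33 s03 s09 s39 q99 by simp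
qed

definition r1 :: "(nat \<Rightarrow> complex) \<Rightarrow> complex" where "r1 v = J (comp1 v) (comp3 v)"
definition r2 :: "(nat \<Rightarrow> complex) \<Rightarrow> complex" where "r2 v = J (comp2 v) (comp3 v)"

lemma pf_minus: assumes "poly_fun f" "poly_fun g" shows "poly_fun (\<lambda>v. f v - g v)"
proof -
  have "poly_fun (\<lambda>v. f v + (\<lambda>_. -1) v * g v)" by (intro pf_add pf_mult assms pf_const)
  then show ?thesis by simp
qed

lemma r1_pf: "poly_fun r1"
  unfolding r1_def J_def h0_def h1_def h2_def comp1_def comp3_def
  by (intro pf_minus pf_add pf_mult pf_const pf_coord) simp_all
lemma r2_pf: "poly_fun r2"
  unfolding r2_def J_def h0_def h1_def h2_def comp2_def comp3_def
  by (intro pf_minus pf_add pf_mult pf_const pf_coord) simp_all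

lemma rel_eqs:
  assumes "sl2_rel a b c d v w"
  shows "w 0 = act a b c d v 0" "w 1 = act a b c d v 1" "w 2 = act a b c d v 2" "w 3 = act a b c d v 3"
    "w 4 = act a b c d v 4" "w 5 = act a b c d v 5" "w 6 = act a b c d v 6" "w 7 = act a b c d v 7"
    "w 8 = act a b c d v 8" "w 9 = act a b c d v 9" "w 10 = act a b c d v 10"
  using rel_act[OF assms] by simp_all

lemma r1_inv: "sl2_invariant r1"
  unfolding sl2_invariant_def
proof (intro allI impI)
  fix a b c d v w assume D: "a*d - b*c = 1" and R: "sl2_rel a b c d v w"
  have "r1 w = J (qtr a b c d (comp1 v)) (qrt a b c d (comp3 v))"
    unfolding r1_def J_def h0_def h1_def h2_def
    by (simp add: comp1_def comp3_def rel_act[OF R] act_def)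
  also have "\<dots> = r1 v" unfolding Jinv D r1_def by simp
  finally show "r1 w = r1 v" .
qed

lemma r2_inv: "sl2_invariant r2"
  unfolding sl2_invariant_def
proof (intro allI impI)
  fix a b c d v w assume D: "a*d - b*c = 1" and R: "sl2_rel a b c d v w"
  have "r2 w = J (qtr a b c d (comp2 v)) (qrt a b c d (comp3 v))"
    unfolding r2_def J_def h0_def h1_def h2_def
    by (simp add: comp2_def comp3_def rel_act[OF R] act_def)
  also have "\<dots> = r2 v" unfolding Jinv D r2_def by simp
  finally show "r2 w = r2 v" .
qed

lemma r1_scale: "r1 (\<lambda>i. s * v i) = s^4 * r1 v"
  unfolding r1_def J_def h0_def h1_def h2_def comp1_def comp3_def
  by (simp add: power4_eq_xxxx algebra_simps)
lemma r2_scale: "r2 (\<lambda>i. s * v i) = s^4 * r2 v"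
  unfolding r2_def J_def h0_def h1_def h2_def comp2_def comp3_def
  by (simp add: power4_eq_xxxx algebra_simps)
lemma r1_sp: "r1 (special_pt a b) = 36 * a^2"
  unfolding r1_def J_def h0_def h1_def h2_def comp1_def comp3_def special_pt_def
  by (simp add: power2_eq_square)
lemma r2_sp: "r2 (special_pt a b) = 36 * b^2"
  unfolding r2_def J_def h0_def h1_def h2_def comp2_def comp3_def special_pt_def
  by (simp add: power2_eq_square)

lemma deg4_scale:
  assumes inv: "sl2_invariant F" and hp: "hom_poly 4 F" and s: "s \<noteq> 0"
  shows "F (special_pt (s*a) (s*b)) = s^2 * F (special_pt a b)"
proof -
  define l where "l = csqrt s"
  define t where "t = csqrt l"
  have l2: "l^2 = s" unfolding l_def by simp
  have t2: "t^2 = l" unfolding t_def by simp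
  have l0: "l \<noteq> 0" using l2 s by auto
  have t0: "t \<noteq> 0" using t2 l0 by auto
  have h3: "l * (t * (1/t)^3) = 1" using t0 t2 l0 by (simp add: power2_eq_square power3_eq_cube field_simps)
  have h4: "l * t^2 = s" using t2 l2 by (simp add: power2_eq_square)
  have e: "act t 0 0 (1/t) (\<lambda>i. l * special_pt a b i) = special_pt (s*a) (s*b)"
  proof
    fix i
    show "act t 0 0 (1/t) (\<lambda>i. l * special_pt a b i) i = special_pt (s*a) (s*b) i"
      using h3 h4 by (simp add: act_def special_pt_def comp1_def comp2_def comp3_def qtr_def qrt_def mult.assoc mult.left_commute[of l]; arith)
  qed
  have "F (act t 0 0 (1/t) (\<lambda>i. l * special_pt a b i)) = F (\<lambda>i. l * special_pt a b i)"
    by (rule inv_act[OF inv]) (simp add: t0)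
  moreover have "l^4 = s^2" unfolding l2[symmetric] by (simp add: power4_eq_xxxx power2_eq_square)
  ultimately show ?thesis unfolding e hom_scale[OF hp] by simp
qed
lemma deg4_zero:
  assumes inv: "sl2_invariant F" and hp: "hom_poly 4 F"
  shows "\<exists>a b. (a \<noteq> 0 \<or> b \<noteq> 0) \<and> F (special_pt a b) = 0"
proof -
  have l1: "\<And>b. special_pt 1 b = (\<lambda>i. special_pt 1 0 i + b * ev {3} i)"
    by (auto simp: fun_eq_iff special_pt_def ev_def)
  obtain p where p: "\<forall>b. F (\<lambda>i. special_pt 1 0 i + b * ev {3} i) = poly p b" using hom_line[OF hp] by blast
  have pb: "\<And>b. F (special_pt 1 b) = poly p b" by (subst l1) (rule p[rule_format])
  show ?thesis
  proof (cases "\<exists>b. poly p b = 0")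
    case True
    then obtain b where "poly p b = 0" by blast
    then show ?thesis using pb by (intro exI[of _ 1] exI[of _ b]) simp
  next
    case False
    then have const: "constant (poly p)" using fundamental_theorem_of_algebra by blast
    define c where "c = poly p 0"
    have c: "\<And>b. F (special_pt 1 b) = c"
    proof -
      fix b
      have "poly p b = poly p 0" using const unfolding constant_def by blast
      then show "F (special_pt 1 b) = c" using pb c_def by simp
    qed
    have l2: "\<And>a. special_pt a 1 = (\<lambda>i. special_pt 0 1 i + a * ev {0} i)"
      by (auto simp: fun_eq_iff special_pt_def ev_def)
    obtain p' where p': "\<forall>a. F (\<lambda>i. special_pt 0 1 i + a * ev {0} i) = poly p' a" using hom_line[OF hp] by blast
    have pa: "\<And>a. F (special_pt a 1) = poly p' a" by (subst l2) (rule p'[rule_format])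
    have nz: "\<And>a. a \<noteq> 0 \<Longrightarrow> poly (p' - [:0,0,c:]) a = 0"
    proof -
      fix a :: complex assume a: "a \<noteq> 0"
      have "F (special_pt (a*1) (a*(1/a))) = a^2 * F (special_pt 1 (1/a))" by (rule deg4_scale[OF inv hp a])
      then have "poly p' a = a^2 * c" using a pa c by simp
      then show "poly (p' - [:0,0,c:]) a = 0" by (simp add: power2_eq_square algebra_simps)
    qed
    have "p' - [:0,0,c:] = 0"
    proof (rule ccontr)
      assume "p' - [:0,0,c:] \<noteq> 0"
      then have "finite {x. poly (p' - [:0,0,c:]) x = 0}" by (rule poly_roots_finite)
      moreover have "UNIV - {0::complex} \<subseteq> {x. poly (p' - [:0,0,c:]) x = 0}" using nz by auto
      ultimately have "finite (UNIV - {0::complex})" by (rule finite_subset[rotated])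
      then show False by (simp add: infinite_UNIV_char_0)
    qed
    then have "p' = [:0,0,c:]" by simp
    then have "poly p' 0 = 0" by simp
    then show ?thesis using pa by (intro exI[of _ 0] exI[of _ 1]) simp
  qed
qed

lemma deg3: assumes "sl2_invariant F" "hom_poly 3 F" shows "F (special_pt a b) = 0"
proof -
  have e: "act \<i> 0 0 (-\<i>) (special_pt a b) = (\<lambda>i. (-1) * special_pt a b i)"
    by (auto simp: fun_eq_iff act_def special_pt_def comp1_def comp2_def comp3_def qtr_def qrt_def power2_eq_square power3_eq_cube)
  have "F (act \<i> 0 0 (-\<i>) (special_pt a b)) = F (special_pt a b)" by (rule inv_act[OF assms(1)]) simp
  then have "- F (special_pt a b) = F (special_pt a b)" unfolding e hom_scale[OF assms(2)] by simp
  then show ?thesis by simp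
qed

theorem mainTheorem10:
  shows "(\<nexists>fs ds. is_hsop fs ds \<and> mset ds = mset [2,2,2,2,3,3,3,4]) \<and>
         (\<forall>F\<in>invR. \<forall>d\<in>{2,3}. hom_poly d F \<longrightarrow> (\<forall>a b. F (special_pt a b) = 0))"
proof -
  have part2: "\<And>F d a b. F \<in> invR \<Longrightarrow> d \<in> {2,3} \<Longrightarrow> hom_poly d F \<Longrightarrow> F (special_pt a b) = 0"
  proof -
    fix F d a b assume F: "F \<in> invR" and d: "d \<in> {2::nat,3}" and h: "hom_poly d F"
    have inv: "sl2_invariant F" using F by (simp add: invR_def)
    show "F (special_pt a b) = 0"
    proof (cases "d = 2")
      case True then show ?thesis using deg2[OF inv] h by simp
    next
      case False then have "d = 3" using d by simp
      then show ?thesis using deg3[OF inv] h by simp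
    qed
  qed
  have part1: "\<nexists>fs ds. is_hsop fs ds \<and> mset ds = mset [2,2,2,2,3,3,3,4]"
  proof
    assume "\<exists>fs ds. is_hsop fs ds \<and> mset ds = mset [2,2,2,2,3,3,3,4]"
    then obtain fs ds where H: "is_hsop fs ds" and M: "mset ds = mset [2::nat,2,2,2,3,3,3,4]" by blast
    have len: "length fs = length ds" using H by (simp add: is_hsop_def)
    have fsi: "\<And>i. i < length fs \<Longrightarrow> fs ! i \<in> invR \<and> ds ! i > 0 \<and> hom_poly (ds ! i) (fs ! i)"
      using H by (simp add: is_hsop_def)
    have integ: "\<forall>r\<in>invR. integral_over fs r" using H by (simp add: is_hsop_def)
    have setds: "set ds = {2,3,4}" using mset_eq_setD[OF M] by auto
    have "count (mset ds) 4 = 1" using M by simp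
    then have "length (filter ((=) 4) ds) = 1" by (simp add: count_mset count_list_eq_length_filter)
    then have card1: "card {i. i < length ds \<and> 4 = ds ! i} = 1" by (simp add: length_filter_conv_card)
    have "4 \<in> set ds" using setds by simp
    then obtain i4 where i4: "i4 < length ds" "ds ! i4 = 4" by (metis in_set_conv_nth)
    have uniq: "\<And>j. j < length ds \<Longrightarrow> ds ! j = 4 \<Longrightarrow> j = i4"
    proof (rule ccontr)
      fix j assume j: "j < length ds" "ds ! j = 4" "j \<noteq> i4"
      have "{i4, j} \<subseteq> {i. i < length ds \<and> 4 = ds ! i}" using i4 j by auto
      moreover have "finite {i. i < length ds \<and> 4 = ds ! i}" by simp
      ultimately have "card {i4, j} \<le> 1" using card1 card_mono by metis
      then show False using j(3) by simp
    qed
    have i4f: "i4 < length fs" using i4 len by simp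
    have F8: "sl2_invariant (fs ! i4)" "hom_poly 4 (fs ! i4)" using fsi[OF i4f] i4 by (auto simp: invR_def)
    obtain a0 b0 where ab: "a0 \<noteq> 0 \<or> b0 \<noteq> 0" and z8: "(fs ! i4) (special_pt a0 b0) = 0"
      using deg4_zero[OF F8] by blast
    define p where "p = special_pt a0 b0"
    have vanish: "\<And>j. j < length fs \<Longrightarrow> (fs ! j) p = 0"
    proof -
      fix j assume j: "j < length fs"
      show "(fs ! j) p = 0"
      proof (cases "ds ! j = 4")
        case True then have "j = i4" using uniq j len by simp
        then show ?thesis using z8 p_def by simp
      next
        case False
        have "ds ! j \<in> set ds" using j len by simp
        then have "ds ! j \<in> {2,3}" using False setds by auto
        then show ?thesis unfolding p_def using part2 fsi[OF j] by blast
      qed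
    qed
    have scale0: "\<And>j s. j < length fs \<Longrightarrow> (fs ! j) (\<lambda>i. s * p i) = 0"
    proof -
      fix j s assume j: "j < length fs"
      have "hom_poly (ds ! j) (fs ! j)" using fsi[OF j] by simp
      then show "(fs ! j) (\<lambda>i. s * p i) = 0" by (simp add: hom_scale vanish[OF j])
    qed
    define r where "r = (if a0 \<noteq> 0 then r1 else r2)"
    have rR: "r \<in> invR" unfolding r_def invR_def using r1_pf r2_pf r1_inv r2_inv by simp
    have rp: "r p \<noteq> 0" unfolding r_def p_def using ab r1_sp r2_sp by auto
    have rs: "\<And>s. r (\<lambda>i. s * p i) = s^4 * r p" unfolding r_def using r1_scale r2_scale by simp
    obtain n cs where n: "n > 0" and cs: "\<And>i. i < n \<Longrightarrow> alg_gen fs (cs i)"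
      and eq: "\<And>v. r v ^ n + (\<Sum>i<n. cs i v * r v ^ i) = 0"
      using integ rR unfolding integral_over_def by blast
    define \<kappa> where "\<kappa> i = cs i (\<lambda>k. 0 * p k)" for i
    have csc: "\<And>i s. i < n \<Longrightarrow> cs i (\<lambda>k. s * p k) = \<kappa> i"
    proof -
      fix i s assume i: "i < n"
      have "\<forall>j<length fs. (fs ! j) (\<lambda>k. s * p k) = (fs ! j) (\<lambda>k. 0 * p k)"
      proof (intro allI impI)
        fix j assume j: "j < length fs"
        show "(fs ! j) (\<lambda>k. s * p k) = (fs ! j) (\<lambda>k. 0 * p k)" by (simp only: scale0[OF j])
      qed
      then show "cs i (\<lambda>k. s * p k) = \<kappa> i" unfolding \<kappa>_def by (rule alg_gen_dep[OF cs[OF i]])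
    qed
    have all: "\<And>z. z^n + (\<Sum>i<n. \<kappa> i * z^i) = 0"
    proof -
      fix z :: complex
      define s where "s = csqrt (csqrt (z / r p))"
      have s2: "s^2 = csqrt (z / r p)" unfolding s_def by simp
      have "s^4 = (s^2)^2" by (simp flip: power_mult)
      then have "s^4 = z / r p" using s2 by simp
      then have rz: "r (\<lambda>i. s * p i) = z" using rs rp by simp
      have "r (\<lambda>i. s * p i) ^ n + (\<Sum>i<n. cs i (\<lambda>i. s * p i) * r (\<lambda>i. s * p i) ^ i) = 0" by (rule eq)
      then show "z^n + (\<Sum>i<n. \<kappa> i * z^i) = 0" unfolding rz using csc by simp
    qed
    define P where "P = monom 1 n + (\<Sum>i<n. monom (\<kappa> i) i)"
    have "\<forall>z. poly P z = 0" unfolding P_def using all by (simp add: poly_monom poly_sum)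
    then have "P = 0" by (simp add: poly_all_0_iff_0)
    moreover have "coeff P n = 1" unfolding P_def by (simp add: coeff_sum)
    ultimately show False by simp
  qed
  show ?thesis using part1 part2 by blast
qed

end
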